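(* Assume Martin's Axiom and $\mathfrak c=\aleph_2$. Let $n\ge1$. Then there exists a family $\{B_\xi:\xi<\mathfrak c\}$ of pairwise disjoint subsets of $\mathbb R^n$ such that (1) for every $\xi$, $\lambda_*(B_\xi)=0$ and $\lambda_*(\mathbb R^n\setminus B_\xi)=0$, (2) no $B_\xi$ is a $2$-covering, and (3) $\{B_\xi:\xi<\mathfrak c\}$ is a ${<}\mathfrak c$-S-covering (i.e. a ${<}\aleph_2$-S-covering).
   Context: $\mathfrak c=|\mathbb R|$; $\lambda_*$ is inner Lebesgue measure on $\mathbb R^n$. A set $A\subseteq\mathbb R^n$ is a $2$-covering if for every $C\subseteq\mathbb R^n$ with $|C|=2$ there is $x$ with $C+x\subseteq A$. A family $\mathcal A$ of pairwise disjoint subsets of $\mathbb R^n$ is a ${<}\kappa$-S-covering if for every $F\subseteq\mathbb R^n$ with $|F|<\kappa$ there is $t$ with $F+t\subseteq\bigcup\mathcal A$ and $|(F+t)\cap A|\le1$ for all $A\in\mathcal A$. *)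

theory Defs
  imports "HOL-Analysis.Analysis"
begin

definition continuum_is_aleph2 :: bool where
  "continuum_is_aleph2 \<longleftrightarrow>
     (card_of (UNIV :: real set), cardSuc (cardSuc natLeq)) \<in> ordIso"

definition compatible :: "'a set \<Rightarrow> ('a \<Rightarrow> 'a \<Rightarrow> bool) \<Rightarrow> 'a \<Rightarrow> 'a \<Rightarrow> bool" where
  "compatible P le p q \<longleftrightarrow> (\<exists>r\<in>P. le r p \<and> le r q)"

definition antichain :: "'a set \<Rightarrow> ('a \<Rightarrow> 'a \<Rightarrow> bool) \<Rightarrow> 'a set \<Rightarrow> bool" where
  "antichain P le A \<longleftrightarrow> A \<subseteq> P \<and> (\<forall>p\<in>A. \<forall>q\<in>A. p \<noteq> q \<longrightarrow> \<not> compatible P le p q)"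

definition ccc_poset :: "'a set \<Rightarrow> ('a \<Rightarrow> 'a \<Rightarrow> bool) \<Rightarrow> bool" where
  "ccc_poset P le \<longleftrightarrow> P \<noteq> {}
     \<and> (\<forall>p\<in>P. le p p)
     \<and> (\<forall>p\<in>P. \<forall>q\<in>P. le p q \<and> le q p \<longrightarrow> p = q)
     \<and> (\<forall>p\<in>P. \<forall>q\<in>P. \<forall>r\<in>P. le p q \<and> le q r \<longrightarrow> le p r)
     \<and> (\<forall>A. antichain P le A \<longrightarrow> countable A)"

definition dense_in :: "'a set \<Rightarrow> ('a \<Rightarrow> 'a \<Rightarrow> bool) \<Rightarrow> 'a set \<Rightarrow> bool" where
  "dense_in P le D \<longleftrightarrow> D \<subseteq> P \<and> (\<forall>p\<in>P. \<exists>d\<in>D. le d p)"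

definition filter_in :: "'a set \<Rightarrow> ('a \<Rightarrow> 'a \<Rightarrow> bool) \<Rightarrow> 'a set \<Rightarrow> bool" where
  "filter_in P le G \<longleftrightarrow> G \<subseteq> P \<and> G \<noteq> {}
     \<and> (\<forall>p\<in>G. \<forall>q\<in>P. le p q \<longrightarrow> q \<in> G)
     \<and> (\<forall>p\<in>G. \<forall>q\<in>G. \<exists>r\<in>G. le r p \<and> le r q)"

text \<open>Posets are taken with
  carrier a subset of the type real set (so every poset of size at most 2^c is covered,
  in particular all posets of size less than c, which suffices for MA).\<close>
definition martins_axiom :: bool where
  "martins_axiom \<longleftrightarrow>
     (\<forall>(P :: real set set) le \<D>. ccc_poset P le \<and> (\<forall>D\<in>\<D>. dense_in P le D)
        \<and> (card_of \<D>, card_of (UNIV :: real set)) \<in> ordLess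
        \<longrightarrow> (\<exists>G. filter_in P le G \<and> (\<forall>D\<in>\<D>. G \<inter> D \<noteq> {})))"

definition inner_lebesgue :: "'a::euclidean_space set \<Rightarrow> ennreal" where
  "inner_lebesgue A = (SUP K \<in> {K \<in> sets lebesgue. K \<subseteq> A}. emeasure lebesgue K)"

definition two_covering :: "'a::ab_group_add set \<Rightarrow> bool" where
  "two_covering A \<longleftrightarrow> (\<forall>C. card C = 2 \<longrightarrow> (\<exists>x. (\<lambda>c. c + x) ` C \<subseteq> A))"

definition lt_S_covering :: "'a::ab_group_add set set \<Rightarrow> 'b rel \<Rightarrow> bool" where
  "lt_S_covering \<A> \<kappa> \<longleftrightarrow>
     (\<forall>A\<in>\<A>. \<forall>A'\<in>\<A>. A \<noteq> A' \<longrightarrow> A \<inter> A' = {})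
     \<and> (\<forall>F. (card_of F, \<kappa>) \<in> ordLess \<longrightarrow>
          (\<exists>t. (\<lambda>f. f + t) ` F \<subseteq> \<Union>\<A>
             \<and> (\<forall>A\<in>\<A>. \<forall>a\<in>(\<lambda>f. f + t) ` F \<inter> A. \<forall>b\<in>(\<lambda>f. f + t) ` F \<inter> A. a = b)))"

end

theory Submission
  imports Defs "HOL-Probability.Distribution_Functions"
begin

unbundle cardinal_syntax




definition Small :: "'a set \<Rightarrow> bool" where
  "Small A \<longleftrightarrow> |A| <o |UNIV :: real set|"

lemma stable_cardSuc':
  assumes CARD: "Card_order r" and INF: "\<not>finite (Field r)"
  shows "stable(cardSuc r)"
  using infinite_cardSuc_regularCard regularCard_stable
  by (metis CARD INF cardSuc_Card_order cardSuc_finite)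

lemma c_stable:
  assumes "continuum_is_aleph2"
  shows "stable |UNIV :: real set|"
proof -
  have "Card_order (cardSuc natLeq)" by (simp add: cardSuc_Card_order natLeq_Card_order)
  moreover have "\<not> finite (Field (cardSuc natLeq))"
    by (metis Field_natLeq cardSuc_finite infinite_UNIV_nat natLeq_Card_order)
  ultimately have "stable (cardSuc (cardSuc natLeq))" by (rule stable_cardSuc')
  then show ?thesis using assms unfolding continuum_is_aleph2_def
    using stable_ordIso1 by blast
qed

lemma Small_subset: "Small B \<Longrightarrow> A \<subseteq> B \<Longrightarrow> Small A"
  unfolding Small_def using card_of_mono1 ordLeq_ordLess_trans by blast

lemma Small_image: "Small A \<Longrightarrow> Small (f ` A)"
  unfolding Small_def using card_of_image ordLeq_ordLess_trans by blast

lemma not_Small_real: "\<not> Small (UNIV :: real set)"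
  unfolding Small_def using ordLess_irreflexive by blast

lemma Small_Un: "Small A \<Longrightarrow> Small B \<Longrightarrow> Small (A \<union> B)"
  unfolding Small_def
  by (metis Field_card_of card_of_Card_order card_of_Un_ordLess_infinite_Field infinite_UNIV_char_0)

lemma Small_countable: "countable A \<Longrightarrow> Small A"
proof -
  assume "countable A"
  then obtain f :: "'a \<Rightarrow> nat" where "inj_on f A" unfolding countable_def by blast
  then have "|A| \<le>o |UNIV :: nat set|" using card_of_ordLeq[of A "UNIV :: nat set"] by auto
  moreover have "|UNIV :: nat set| <o |UNIV :: real set|"
  proof -
    have "\<not> |UNIV :: real set| \<le>o |UNIV :: nat set|"
    proof
      assume "|UNIV :: real set| \<le>o |UNIV :: nat set|"
      then obtain f :: "real \<Rightarrow> nat" where "inj f"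
        using card_of_ordLeq[of "UNIV :: real set" "UNIV :: nat set"] by auto
      then show False using uncountable_UNIV_real unfolding countable_def by blast
    qed
    then show ?thesis by (metis card_of_Well_order not_ordLeq_iff_ordLess)
  qed
  ultimately show ?thesis unfolding Small_def using ordLeq_ordLess_trans by blast
qed

lemma Small_finite: "finite A \<Longrightarrow> Small A"
  by (simp add: Small_countable countable_finite)

lemma Small_UNION:
  assumes "stable |UNIV :: real set|" "Small I" "\<And>i. i \<in> I \<Longrightarrow> Small (F i)"
  shows "Small (\<Union>i\<in>I. F i)"
  using assms unfolding Small_def using stable_UNION by blast

lemma Small_Times:
  assumes "stable |UNIV :: real set|" "Small A" "Small B"
  shows "Small (A \<times> B)"
  using assms stable_elim[of "|UNIV :: real set|" A "\<lambda>_. B"] unfolding Small_def by blast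

lemma not_Small_interval:
  fixes a b :: real
  assumes "a < b" "{a<..<b} \<subseteq> S"
  shows "\<not> Small S"
proof
  assume "Small S"
  have "S \<approx> (UNIV :: real set)" using eqpoll_real_subset[of a b S] assms
    by (meson greaterThanLessThan_iff subsetD)
  then have "|UNIV :: real set| \<le>o |S|"
    using eqpoll_iff_card_of_ordIso ordIso_iff_ordLeq by blast
  with \<open>Small S\<close> show False unfolding Small_def using not_ordLess_ordLeq by blast
qed

lemma not_Small_inj:
  assumes "inj (f :: real \<Rightarrow> 'a)" "range f \<subseteq> S"
  shows "\<not> Small S"
proof
  assume "Small S"
  then have "Small (range f)" using assms Small_subset by blast
  moreover have "|UNIV :: real set| \<le>o |range f|"
    using assms card_of_ordLeq[of "UNIV :: real set" "range f"] by auto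
  ultimately show False unfolding Small_def using not_ordLess_ordLeq by blast
qed





abbreviation R0 :: "real rel" where "R0 \<equiv> |UNIV :: real set|"

lemma R0_wo: "wo_rel R0"
  by (simp add: card_of_Well_order wo_rel_def)

lemma R0_Field: "Field R0 = UNIV" by (rule Field_card_of)

lemma R0_total: "i \<noteq> j \<Longrightarrow> i \<in> underS R0 j \<or> j \<in> underS R0 i"
  using wo_rel.TOTALS[OF R0_wo] R0_Field unfolding underS_def by auto

lemma R0_underS_irrefl: "i \<notin> underS R0 i"
  unfolding underS_def by auto

lemma R0_underS_asym: "i \<in> underS R0 j \<Longrightarrow> j \<notin> underS R0 i"
  using R0_wo unfolding underS_def wo_rel_def well_order_on_def linear_order_on_def
    partial_order_on_def antisym_def by auto

lemma Small_underS: "Small (underS R0 i)"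
  unfolding Small_def by (rule card_of_underS) (metis R0_Field card_of_Card_order, simp add: R0_Field)

lemma Small_bounded:
  assumes st: "stable R0" and X: "Small X"
  shows "\<exists>b. X \<subseteq> underS R0 b"
proof (rule ccontr)
  assume "\<not> ?thesis"
  then have h: "\<forall>b. \<exists>x\<in>X. x \<notin> underS R0 b" by blast
  have "UNIV \<subseteq> (\<Union>x\<in>X. insert x (underS R0 x))"
  proof
    fix b :: real
    obtain x where "x \<in> X" "x \<notin> underS R0 b" using h by blast
    then have "x = b \<or> b \<in> underS R0 x" using R0_total by blast
    then show "b \<in> (\<Union>x\<in>X. insert x (underS R0 x))" using \<open>x \<in> X\<close> by blast
  qed
  moreover have "Small (\<Union>x\<in>X. insert x (underS R0 x))"
    using st X by (intro Small_UNION) (auto intro: Small_Un Small_finite Small_underS simp del: Un_insert_left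
      simp: insert_is_Un[of _ "underS R0 _"])
  ultimately show False using not_Small_real Small_subset by blast
qed

lemma rec_choice:
  fixes Cand :: "real \<Rightarrow> 'a set" and Forb :: "real \<Rightarrow> 'a \<Rightarrow> real \<Rightarrow> 'a set"
  assumes H: "\<And>i g. \<exists>v \<in> Cand i. \<forall>j \<in> underS R0 i. v \<notin> Forb j (g j) i"
  shows "\<exists>x. \<forall>i. x i \<in> Cand i \<and> (\<forall>j \<in> underS R0 i. x i \<notin> Forb j (x j) i)"
proof -
  define F where "F = (\<lambda>g i. SOME v. v \<in> Cand i \<and> (\<forall>j \<in> underS R0 i. v \<notin> Forb j (g j) i))"
  define x where "x = wfrec (R0 - Id) F"
  have wf: "wf (R0 - Id)" using wo_rel.WF[OF R0_wo] .
  have R: "(j, i) \<in> R0 - Id \<longleftrightarrow> j \<in> underS R0 i" for i j unfolding underS_def by auto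
  have "x i \<in> Cand i \<and> (\<forall>j \<in> underS R0 i. x i \<notin> Forb j (x j) i)" for i
  proof -
    have xi: "x i = F (cut x (R0 - Id) i) i" unfolding x_def by (rule wfrec[OF wf])
    let ?g = "cut x (R0 - Id) i"
    have g: "j \<in> underS R0 i \<Longrightarrow> ?g j = x j" for j using cut_apply R by metis
    have "F ?g i \<in> Cand i \<and> (\<forall>j \<in> underS R0 i. F ?g i \<notin> Forb j (?g j) i)"
      unfolding F_def by (rule someI_ex) (use H in blast)
    then show ?thesis using xi g by auto
  qed
  then show ?thesis by blast
qed





lemma exists_inj_nat_set_real: "\<exists>g :: nat set \<Rightarrow> real. inj g"
  using nat_sets_eqpoll_reals unfolding eqpoll_def bij_betw_def by blast

lemma exists_inj_real_nat_set: "\<exists>h :: real \<Rightarrow> nat set. inj h"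
  using nat_sets_eqpoll_reals unfolding eqpoll_def bij_betw_def
  by (metis bij_betw_def bij_betw_inv_into bij_betw_imp_inj_on)

lemma exists_inj_vec_real: "\<exists>\<rho> :: real^'n \<Rightarrow> real. inj \<rho>"
proof -
  obtain g :: "nat set \<Rightarrow> real" where g: "inj g" using exists_inj_nat_set_real by blast
  obtain h :: "real \<Rightarrow> nat set" where h: "inj h" using exists_inj_real_nat_set by blast
  define \<rho>' where "\<rho>' = (\<lambda>x::real^'n. {prod_encode (to_nat k, m) | k m. m \<in> h (x $ k)})"
  have mem: "prod_encode (to_nat k, m) \<in> \<rho>' x \<longleftrightarrow> m \<in> h (x $ k)" for x k m
  proof
    assume "prod_encode (to_nat k, m) \<in> \<rho>' x"
    then obtain k' m' where "prod_encode (to_nat k, m) = prod_encode (to_nat k', m')" "m' \<in> h (x $ k')"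
      unfolding \<rho>'_def by blast
    then show "m \<in> h (x $ k)" using inj_prod_encode[of UNIV] inj_to_nat
      by (metis injD prod.inject)
  qed (auto simp: \<rho>'_def)
  have "inj \<rho>'"
  proof (rule injI)
    fix x y :: "real^'n" assume "\<rho>' x = \<rho>' y"
    then have "h (x $ k) = h (y $ k)" for k using mem by blast
    then show "x = y" using h by (simp add: inj_eq vec_eq_iff)
  qed
  then have "inj (g \<circ> \<rho>')" using g by (simp add: inj_compose)
  then show ?thesis by blast
qed

lemma not_Small_vec_UNIV: "\<not> Small (UNIV :: (real^'n) set)"
  by (rule not_Small_inj[of "vec :: real \<Rightarrow> real^'n"]) (auto simp: inj_def vec_eq_iff)




lemma negl_hyper: "negligible {x::real^'n. x$k = s}"
  by (simp add: cart_eq_inner_axis negligible_standard_hyperplane)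

lemma compact_pos_not_Small:
  fixes K :: "(real^'n) set"
  assumes cK: "compact K" and pos: "emeasure lebesgue K > 0"
  shows "\<not> Small K"
proof
  assume sK: "Small K"
  obtain k :: 'n where True by blast
  define \<pi> where "\<pi> = (\<lambda>x::real^'n. x $ k)"
  define M where "M = distr (restrict_space lebesgue K) borel \<pi>"
  have Kf: "K \<in> fmeasurable lebesgue" using lmeasurable_compact[OF cK] .
  have Kl: "K \<in> sets lebesgue" using Kf by (simp add: fmeasurable_def)
  have fin: "emeasure lebesgue K < \<infinity>" using Kf unfolding fmeasurable_def by blast
  have contpi: "continuous_on UNIV \<pi>" unfolding \<pi>_def by (intro continuous_intros)
  have "\<pi> \<in> borel_measurable borel" by (rule borel_measurable_continuous_onI[OF contpi])
  then have "\<pi> \<in> borel_measurable lborel" by simp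
  then have mpi: "\<pi> \<in> borel_measurable lebesgue" by (rule measurable_completion)
  have meas: "\<pi> \<in> measurable (restrict_space lebesgue K) borel"
    by (rule measurable_restrict_space1[OF mpi])
  have emM: "emeasure M A = emeasure lebesgue (\<pi> -` A \<inter> K)" if "A \<in> sets borel" for A
    unfolding M_def using that
    by (simp add: emeasure_distr meas emeasure_restrict_space Kl space_restrict_space)
  have sM: "sets M = sets borel" by (simp add: M_def)
  have spM: "space M = UNIV" by (simp add: M_def)
  have eMK: "emeasure M (space M) = emeasure lebesgue K"
    using emM[of UNIV] spM by simp
  have fm: "finite_measure M" by (rule finite_measureI) (use eMK fin in \<open>simp only: top_unique less_top[symmetric]\<close>)
  interpret finite_borel_measure M
    unfolding finite_borel_measure_def finite_borel_measure_axioms_def using fm sM by blast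
  have meM: "measure M A = measure lebesgue (\<pi> -` A \<inter> K)" if "A \<in> sets borel" for A
    using emM[OF that] by (simp add: measure_def)
  define m where "m = measure M UNIV"
  have m: "m = measure lebesgue K" unfolding m_def using meM[of UNIV] by simp
  have mpos: "m > 0" unfolding m using pos fin
    by (simp add: emeasure_eq_measure2 Kf)
  have cont: "isCont (cdf M) s" for s
  proof -
    have "measure M {s} = measure lebesgue (\<pi> -` {s} \<inter> K)" using meM by simp
    also have "\<dots> = 0"
      by (rule negligible_imp_measure0, rule negligible_subset[OF negl_hyper[of k s]]) (auto simp: \<pi>_def)
    finally show ?thesis using isCont_cdf by blast
  qed
  have hit: "\<exists>s. cdf M s = y" if "0 < y" "y < m" for y
  proof -
    have "eventually (\<lambda>s. cdf M s < y) at_bot"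
      using cdf_lim_at_bot \<open>0 < y\<close> order_tendstoD(2) by blast
    then obtain a where a: "cdf M a < y" by (metis eventually_at_bot_linorder order.refl)
    have "eventually (\<lambda>s. cdf M s > y) at_top"
      using cdf_lim_at_top \<open>y < m\<close> order_tendstoD(1) spM m_def by metis
    then obtain b where b: "cdf M b > y" by (metis eventually_at_top_linorder order.refl)
    have ab: "a \<le> b" using a b cdf_nondecreasing[of b a] by linarith
    have "continuous_on {a..b} (cdf M)" using cont by (simp add: continuous_at_imp_continuous_on)
    then show ?thesis using IVT'[of "cdf M" a y b] a b ab by auto
  qed
  have gap: "\<exists>q\<in>\<rat>. cdf M q = cdf M s" if sn: "s \<notin> \<pi> ` K" for s
  proof -
    have "compact (\<pi> ` K)" using compact_continuous_image contpi cK continuous_on_subset by blast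
    then have "open (- (\<pi> ` K))" using compact_imp_closed by blast
    then obtain e where e: "e > 0" "ball s e \<subseteq> - (\<pi> ` K)" using sn
      by (meson ComplI open_contains_ball)
    obtain q where q: "q \<in> \<rat>" "s < q" "q < s + e" using Rats_dense_in_real[of s "s + e"] e by auto
    have "cdf M q - cdf M s = measure M {s<..q}" using cdf_diff_eq q by blast
    also have "\<dots> = measure lebesgue (\<pi> -` {s<..q} \<inter> K)" using meM by simp
    also have "\<pi> -` {s<..q} \<inter> K = {}"
    proof -
      have "{s<..q} \<subseteq> ball s e" using q by (auto simp: dist_real_def)
      then show ?thesis using e by auto
    qed
    finally show ?thesis using q by auto
  qed
  have "{0<..<m} \<subseteq> cdf M ` (\<pi> ` K) \<union> cdf M ` \<rat>"
  proof
    fix y assume "y \<in> {0<..<m}"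
    then obtain s where s: "cdf M s = y" using hit by auto
    show "y \<in> cdf M ` (\<pi> ` K) \<union> cdf M ` \<rat>"
    proof (cases "s \<in> \<pi> ` K")
      case True then show ?thesis using s by blast
    next
      case False then obtain q where "q \<in> \<rat>" "cdf M q = cdf M s" using gap by blast
      then show ?thesis using s by (metis UnI2 image_eqI)
    qed
  qed
  moreover have "Small (cdf M ` (\<pi> ` K) \<union> cdf M ` \<rat>)"
    by (intro Small_Un Small_image sK Small_countable countable_rat)
  ultimately show False using not_Small_interval[OF mpos] by blast
qed

lemma pos_contains_compact:
  fixes S :: "(real^'n) set"
  assumes S: "S \<in> sets lebesgue" and pos: "emeasure lebesgue S > 0"
  shows "\<exists>K. compact K \<and> K \<subseteq> S \<and> emeasure lebesgue K > 0"
proof (rule ccontr)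
  assume nt: "\<not> (\<exists>K. compact K \<and> K \<subseteq> S \<and> emeasure lebesgue K > 0)"
  obtain N C where N: "negligible N" and C: "\<And>n::nat. compact (C n)" and SE: "S = (\<Union>n. C n) \<union> N"
    using lebesgue_regular_inner[OF S] by metis
  have "C n \<subseteq> S" for n using SE by blast
  then have "emeasure lebesgue (C n) = 0" for n using nt C by (auto simp: not_less)
  then have "C n \<in> null_sets lebesgue" for n
    using C lmeasurable_compact by (auto simp: null_sets_def fmeasurable_def)
  then have "(\<Union>n. C n) \<in> null_sets lebesgue" by auto
  moreover have "N \<in> null_sets lebesgue" using N negligible_iff_null_sets negligible_imp_sets by blast
  ultimately have "S \<in> null_sets lebesgue" using SE by auto
  then show False using pos by auto
qed





lemma closed_inj_real: "\<exists>f :: (real^'n) set \<Rightarrow> real. inj_on f {S. closed S}"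
proof -
  obtain B :: "(real^'n) set set" where cB: "countable B" and oB: "\<And>C. C \<in> B \<Longrightarrow> open C"
    and bB: "\<And>S. open S \<Longrightarrow> \<exists>U\<subseteq>B. S = \<Union>U"
    using univ_second_countable by blast
  define f where "f S = {U \<in> B. U \<inter> S = {}}" for S :: "(real^'n) set"
  have rec: "S = - \<Union>(f S)" if cS: "closed S" for S
  proof -
    obtain U where U: "U \<subseteq> B" "- S = \<Union>U" using bB[of "- S"] cS by (auto simp: open_Compl)
    have "\<Union>(f S) = - S" using U unfolding f_def by blast
    then show ?thesis by auto
  qed
  have inj1: "inj_on f {S. closed S}"
    by (rule inj_onI) (metis mem_Collect_eq rec)
  define g where "g X = to_nat_on B ` X" for X
  have inj2: "inj_on g (f ` {S. closed S})"
  proof (rule inj_onI)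
    fix X Y assume "X \<in> f ` {S. closed S}" "Y \<in> f ` {S. closed S}" "g X = g Y"
    moreover have "X \<subseteq> B" "Y \<subseteq> B" using calculation(1,2) unfolding f_def by auto
    ultimately show "X = Y" unfolding g_def
      using inj_on_image_eq_iff[OF inj_on_to_nat_on[OF cB]] by blast
  qed
  obtain h :: "nat set \<Rightarrow> real" where h: "inj h" using exists_inj_nat_set_real by blast
  have "inj_on (h \<circ> g \<circ> f) {S. closed S}"
    by (intro comp_inj_on inj1 inj2 inj_on_subset[OF h]) auto
  then show ?thesis by blast
qed

lemma real_pair_inj: "\<exists>f :: real \<times> real \<Rightarrow> real. inj f"
proof -
  have "|(UNIV :: real set) \<times> (UNIV :: real set)| =o |UNIV :: real set|"
    by (rule card_of_Times_same_infinite) (simp add: infinite_UNIV_char_0)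
  then obtain f :: "real \<times> real \<Rightarrow> real" where "bij_betw f (UNIV \<times> UNIV) UNIV"
    using card_of_ordIso by blast
  then show ?thesis by (auto simp: bij_betw_def)
qed

definition KK :: "(real^'n) set set" where
  "KK = {K. compact K \<and> emeasure lebesgue K > 0} \<union> {UNIV}"

lemma exists_enum:
  "\<exists>\<sigma> :: real \<Rightarrow> (real^'n) set \<times> real. (\<forall>i. fst (\<sigma> i) \<in> KK) \<and> (\<forall>K\<in>KK. \<forall>\<xi>. \<exists>i. \<sigma> i = (K, \<xi>))"
proof -
  obtain f :: "(real^'n) set \<Rightarrow> real" where f: "inj_on f {S. closed S}" using closed_inj_real by blast
  obtain p :: "real \<times> real \<Rightarrow> real" where p: "inj p" using real_pair_inj by blast
  have sub: "KK \<subseteq> {S. closed S}" unfolding KK_def using compact_imp_closed by auto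
  define \<phi> where "\<phi> = (\<lambda>(K, \<xi>). p (f K, \<xi>))"
  have injphi: "inj_on \<phi> (KK \<times> UNIV)"
  proof (rule inj_onI, clarsimp simp: \<phi>_def)
    fix K \<xi> K' \<xi>' assume "K \<in> KK" "K' \<in> KK" "p (f K, \<xi>) = p (f K', \<xi>')"
    then have e: "f K = f K'" "\<xi> = \<xi>'" using injD[OF p] by auto
    have "K \<in> {S. closed S}" "K' \<in> {S. closed S}" using \<open>K \<in> KK\<close> \<open>K' \<in> KK\<close> sub by auto
    then have "K = K'" using inj_onD[OF f e(1)] by blast
    then show "K = K' \<and> \<xi> = \<xi>'" using e by blast
  qed
  define \<sigma> where "\<sigma> i = (if i \<in> \<phi> ` (KK \<times> UNIV) then inv_into (KK \<times> UNIV) \<phi> i else (UNIV, 0))" for i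
  have "fst (\<sigma> i) \<in> KK" for i
  proof (cases "i \<in> \<phi> ` (KK \<times> UNIV)")
    case True
    then have "inv_into (KK \<times> UNIV) \<phi> i \<in> KK \<times> UNIV" by (rule inv_into_into)
    then show ?thesis using True unfolding \<sigma>_def by auto
  next
    case False then show ?thesis unfolding \<sigma>_def by (simp add: KK_def)
  qed
  moreover have "\<exists>i. \<sigma> i = (K, \<xi>)" if kk: "K \<in> KK" for K \<xi>
  proof -
    have m: "(K, \<xi>) \<in> KK \<times> UNIV" using kk by blast
    then have "\<phi> (K, \<xi>) \<in> \<phi> ` (KK \<times> UNIV)" by blast
    then have "\<sigma> (\<phi> (K, \<xi>)) = inv_into (KK \<times> UNIV) \<phi> (\<phi> (K, \<xi>))" unfolding \<sigma>_def by simp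
    also have "\<dots> = (K, \<xi>)" by (rule inv_into_f_f[OF injphi m])
    finally show ?thesis by blast
  qed
  ultimately show ?thesis by blast
qed





lemma Small_insert: "Small A \<Longrightarrow> Small (insert a A)"
  using Small_Un[of "{a}" A] Small_finite[of "{a}"] by simp

lemma inner_zero_if:
  fixes T :: "(real^'n) set"
  assumes "\<And>K. compact K \<Longrightarrow> emeasure lebesgue K > 0 \<Longrightarrow> \<not> K \<subseteq> T"
  shows "inner_lebesgue T = 0"
  unfolding inner_lebesgue_def
proof (rule antisym[OF Sup_least])
  show "0 \<le> Sup (emeasure lebesgue ` {K \<in> sets lebesgue. K \<subseteq> T})" by (rule zero_le)
next
  fix z assume "z \<in> emeasure lebesgue ` {K \<in> sets lebesgue. K \<subseteq> T}"
  then obtain M where M: "M \<in> sets lebesgue" "M \<subseteq> T" and z: "z = emeasure lebesgue M" by blast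
  have "emeasure lebesgue M = 0"
  proof (rule ccontr)
    assume "emeasure lebesgue M \<noteq> 0"
    then have "emeasure lebesgue M > 0" by (simp add: zero_less_iff_neq_zero)
    then obtain K where "compact K" "K \<subseteq> M" "emeasure lebesgue K > 0"
      using pos_contains_compact[OF M(1)] by blast
    then show False using assms M(2) by blast
  qed
  then show "z \<le> 0" using z by simp
qed

theorem mainTheorem14:
  assumes "martins_axiom" and "continuum_is_aleph2"
  shows "\<exists>B :: real \<Rightarrow> (real ^ 'n) set.
           (\<forall>\<xi> \<eta>. \<xi> \<noteq> \<eta> \<longrightarrow> B \<xi> \<inter> B \<eta> = {})
         \<and> (\<forall>\<xi>. inner_lebesgue (B \<xi>) = 0 \<and> inner_lebesgue (UNIV - B \<xi>) = 0)
         \<and> (\<forall>\<xi>. \<not> two_covering (B \<xi>))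
         \<and> lt_S_covering (range B) (card_of (UNIV :: real set))"
proof -
  have st: "stable R0" using c_stable[OF assms(2)] .
  obtain \<rho> :: "real^'n \<Rightarrow> real" where \<rho>: "inj \<rho>" using exists_inj_vec_real by blast
  define A where "A \<beta> = {y. \<rho> y \<in> underS R0 \<beta>}" for \<beta>
  have SA: "Small (A \<beta>)" for \<beta>
  proof -
    have "A \<beta> \<subseteq> inv \<rho> ` underS R0 \<beta>" unfolding A_def using \<rho> by (force simp: inv_f_f)
    then show ?thesis using Small_subset Small_image Small_underS by blast
  qed
  define FZ where "FZ \<beta>' v \<beta> = (\<lambda>(a', a). a' + v - a) ` (A \<beta>' \<times> A \<beta>)" for \<beta>' v \<beta>
  have "\<exists>tz. \<forall>\<beta>. tz \<beta> \<in> (UNIV :: (real^'n) set) \<and> (\<forall>\<beta>' \<in> underS R0 \<beta>. tz \<beta> \<notin> FZ \<beta>' (tz \<beta>') \<beta>)"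
  proof (rule rec_choice)
    fix \<beta> and g :: "real \<Rightarrow> real^'n"
    have "Small (\<Union>\<beta>' \<in> underS R0 \<beta>. FZ \<beta>' (g \<beta>') \<beta>)"
      unfolding FZ_def by (intro Small_UNION st Small_underS Small_image Small_Times SA)
    then have "\<not> (UNIV :: (real^'n) set) \<subseteq> (\<Union>\<beta>' \<in> underS R0 \<beta>. FZ \<beta>' (g \<beta>') \<beta>)"
      using not_Small_vec_UNIV Small_subset by blast
    then obtain t where "t \<notin> (\<Union>\<beta>' \<in> underS R0 \<beta>. FZ \<beta>' (g \<beta>') \<beta>)"
      by blast
    then show "\<exists>v\<in>UNIV. \<forall>\<beta>'\<in>underS R0 \<beta>. v \<notin> FZ \<beta>' (g \<beta>') \<beta>" by blast
  qed
  then obtain tz where tz: "\<And>\<beta> \<beta>'. \<beta>' \<in> underS R0 \<beta> \<Longrightarrow> tz \<beta> \<notin> FZ \<beta>' (tz \<beta>') \<beta>" by blast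
  define Z where "Z \<beta> = (\<lambda>a. a + tz \<beta>) ` A \<beta>" for \<beta>
  have zone_disj1: "False" if hz: "\<beta>' \<in> underS R0 \<beta>" "p \<in> Z \<beta>" "p \<in> Z \<beta>'" for p \<beta> \<beta>'
  proof -
    obtain a a' where a: "a \<in> A \<beta>" "p = a + tz \<beta>" "a' \<in> A \<beta>'" "p = a' + tz \<beta>'"
      using hz unfolding Z_def by blast
    then have "tz \<beta> = a' + tz \<beta>' - a" by (simp add: algebra_simps)
    then have "tz \<beta> \<in> FZ \<beta>' (tz \<beta>') \<beta>" unfolding FZ_def using a by force
    then show False using tz hz(1) by blast
  qed
  have zone_disj: "\<beta> = \<beta>'" if hz2: "p \<in> Z \<beta>" "p \<in> Z \<beta>'" for p \<beta> \<beta>'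
  proof (rule ccontr)
    assume "\<beta> \<noteq> \<beta>'"
    then have "\<beta> \<in> underS R0 \<beta>' \<or> \<beta>' \<in> underS R0 \<beta>" by (rule R0_total)
    then show False using zone_disj1[of \<beta> \<beta>' p] zone_disj1[of \<beta>' \<beta> p] hz2 by blast
  qed
  define mates where "mates p = {q. \<exists>\<beta>. p \<in> Z \<beta> \<and> q \<in> Z \<beta>}" for p
  have mates_sym: "q \<in> mates p \<longleftrightarrow> p \<in> mates q" for p q unfolding mates_def by blast
  have Small_mates: "Small (mates p)" for p
  proof (cases "\<exists>\<beta>. p \<in> Z \<beta>")
    case True
    then obtain \<beta> where "p \<in> Z \<beta>" by blast
    then have "mates p \<subseteq> Z \<beta>" unfolding mates_def using zone_disj by blast
    then show ?thesis unfolding Z_def using Small_subset Small_image SA by blast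
  next
    case False
    then have "mates p = {}" unfolding mates_def by blast
    then show ?thesis by (simp add: Small_finite)
  qed
  define e :: "real^'n" where "e = 1"
  have e0: "e \<noteq> 0" unfolding e_def by (simp add: vec_eq_iff)
  obtain \<sigma> :: "real \<Rightarrow> (real^'n) set \<times> real" where
    \<sigma>1: "\<And>i. fst (\<sigma> i) \<in> KK" and \<sigma>2: "\<And>K \<xi>. K \<in> KK \<Longrightarrow> \<exists>i. \<sigma> i = (K, \<xi>)"
    using exists_enum by blast
  define S where "S i = fst (\<sigma> i)" for i
  define lb where "lb i = snd (\<sigma> i)" for i
  have nS: "\<not> Small (S i)" for i
  proof -
    have "S i \<in> KK" using \<sigma>1 S_def by simp
    then consider "compact (S i)" "emeasure lebesgue (S i) > 0" | "S i = UNIV" unfolding KK_def by blast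
    then show ?thesis
    proof cases
      case 1 then show ?thesis by (rule compact_pos_not_Small)
    next
      case 2 then show ?thesis using not_Small_vec_UNIV by simp
    qed
  qed
  define P where "P i = {p. \<rho> p = lb i}" for i
  have SP: "Small (P i)" for i
  proof -
    have "P i \<subseteq> {inv \<rho> (lb i)}" unfolding P_def using \<rho> by clarsimp (metis inv_f_f)
    then show ?thesis using Small_subset Small_finite by blast
  qed
  define F0 where "F0 i = (\<Union>p \<in> P i. mates p \<union> {p + e, p - e})" for i
  define Fb where "Fb j v i = {v} \<union> (if lb j = lb i then mates v \<union> {v + e, v - e} else {})" for j v i
  have SF0: "Small (F0 i)" for i
    unfolding F0_def by (intro Small_UNION st SP Small_Un Small_mates Small_finite) auto
  have SFb: "Small (Fb j v i)" for j v i
    unfolding Fb_def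
    by (cases "lb j = lb i") (simp_all add: Small_Un Small_mates Small_finite Small_insert)
  have "\<exists>x. \<forall>i. x i \<in> S i - F0 i \<and> (\<forall>j \<in> underS R0 i. x i \<notin> Fb j (x j) i)"
  proof (rule rec_choice)
    fix i and g :: "real \<Rightarrow> real^'n"
    have "Small (F0 i \<union> (\<Union>j \<in> underS R0 i. Fb j (g j) i))"
      by (intro Small_Un SF0 Small_UNION st Small_underS SFb)
    then have "\<not> S i \<subseteq> F0 i \<union> (\<Union>j \<in> underS R0 i. Fb j (g j) i)"
      using nS Small_subset by blast
    then obtain v where "v \<in> S i" "v \<notin> F0 i \<union> (\<Union>j \<in> underS R0 i. Fb j (g j) i)"
      by blast
    then show "\<exists>v\<in>S i - F0 i. \<forall>j\<in>underS R0 i. v \<notin> Fb j (g j) i" by blast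
  qed
  then obtain x where x1: "\<And>i. x i \<in> S i" and x2: "\<And>i. x i \<notin> F0 i"
    and x3: "\<And>i j. j \<in> underS R0 i \<Longrightarrow> x i \<notin> Fb j (x j) i" by blast
  have xinj: "inj x"
  proof (rule injI, rule ccontr)
    fix i j assume "x i = x j" "i \<noteq> j"
    then show False using R0_total[of i j] x3[of j i] x3[of i j] unfolding Fb_def by auto
  qed
  have pair: "x i \<notin> mates (x j) \<and> x i \<noteq> x j + e \<and> x i \<noteq> x j - e"
    if "i \<noteq> j" "lb i = lb j" for i j
  proof (cases "j \<in> underS R0 i")
    case True then show ?thesis using x3[of j i] that unfolding Fb_def by auto
  next
    case False
    then have "i \<in> underS R0 j" using R0_total that(1) by blast
    then have "x j \<notin> mates (x i) \<and> x j \<noteq> x i + e \<and> x j \<noteq> x i - e"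
      using x3[of i j] that unfolding Fb_def by auto
    then have H: "x j \<notin> mates (x i)" "x j \<noteq> x i + e" "x j \<noteq> x i - e" by blast+
    have "x i \<notin> mates (x j)" using H(1) mates_sym by blast
    moreover have "x i \<noteq> x j + e"
    proof
      assume "x i = x j + e" then have "x j = x i - e" by simp
      then show False using H(3) by blast
    qed
    moreover have "x i \<noteq> x j - e"
    proof
      assume "x i = x j - e" then have "x j = x i + e" by simp
      then show False using H(2) by blast
    qed
    ultimately show ?thesis by blast
  qed
  have unary: "x i \<notin> mates p \<and> x i \<noteq> p + e \<and> x i \<noteq> p - e" if "\<rho> p = lb i" for i p
    using x2[of i] that unfolding F0_def P_def by auto
  define lab where "lab y = (if y \<in> range x then lb (inv x y) else \<rho> y)" for y
  have lab_x: "lab (x i) = lb i" for i unfolding lab_def using xinj by (simp add: inv_f_f)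
  have lab_nx: "y \<notin> range x \<Longrightarrow> lab y = \<rho> y" for y unfolding lab_def by simp
  have lab_e: "lab (y + e) \<noteq> lab y" for y
  proof
    assume eq: "lab (y + e) = lab y"
    show False
    proof (cases "y \<in> range x"; cases "y + e \<in> range x")
      assume "y \<in> range x" "y + e \<in> range x"
      then obtain i j where ij: "y = x i" "y + e = x j" by blast
      then have "i \<noteq> j" using e0 by auto
      moreover have "lb j = lb i" using eq ij lab_x by simp
      ultimately show False using pair[of j i] ij by auto
    next
      assume "y \<in> range x" "y + e \<notin> range x"
      then obtain i where i: "y = x i" by blast
      have "\<rho> (y + e) = lb i" using eq i lab_x lab_nx \<open>y + e \<notin> range x\<close> by simp
      then show False using unary[of "y + e" i] i by simp
    next
      assume "y \<notin> range x" "y + e \<in> range x"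
      then obtain j where j: "y + e = x j" by blast
      have "\<rho> y = lb j" using eq j lab_x lab_nx \<open>y \<notin> range x\<close> by simp
      then show False using unary[of y j] j by simp
    next
      assume "y \<notin> range x" "y + e \<notin> range x"
      then have "\<rho> (y + e) = \<rho> y" using eq lab_nx by simp
      then show False using \<rho> e0 by (simp add: inj_eq)
    qed
  qed
  have zone_inj: "u = v" if "u \<in> Z \<beta>" "v \<in> Z \<beta>" "lab u = lab v" for u v \<beta>
  proof (rule ccontr)
    assume uv: "u \<noteq> v"
    have m1: "v \<in> mates u" "u \<in> mates v" unfolding mates_def using that by blast+
    show False
    proof (cases "u \<in> range x"; cases "v \<in> range x")
      assume "u \<in> range x" "v \<in> range x"
      then obtain i j where ij: "u = x i" "v = x j" by blast
      then have "i \<noteq> j" using uv by auto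
      moreover have "lb i = lb j" using that(3) ij lab_x by simp
      ultimately show False using pair[of i j] ij m1 by auto
    next
      assume "u \<in> range x" "v \<notin> range x"
      then obtain i where i: "u = x i" by blast
      have "\<rho> v = lb i" using that(3) i lab_x lab_nx \<open>v \<notin> range x\<close> by simp
      then show False using unary[of v i] i m1 by simp
    next
      assume "u \<notin> range x" "v \<in> range x"
      then obtain j where j: "v = x j" by blast
      have "\<rho> u = lb j" using that(3) j lab_x lab_nx \<open>u \<notin> range x\<close> by simp
      then show False using unary[of u j] j m1 by simp
    next
      assume "u \<notin> range x" "v \<notin> range x"
      then have "\<rho> u = \<rho> v" using that(3) lab_nx by simp
      then show False using \<rho> uv by (simp add: inj_eq)
    qed
  qed
  have hitK: "\<exists>y\<in>K. lab y = \<xi>" if kk: "K \<in> KK" for K \<xi>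
  proof -
    obtain i where "\<sigma> i = (K, \<xi>)" using \<sigma>2[OF kk] by blast
    then have "S i = K" "lb i = \<xi>" unfolding S_def lb_def by auto
    then show ?thesis using x1[of i] lab_x[of i] by blast
  qed
  define B where "B \<xi> = {y. lab y = \<xi>}" for \<xi>
  have P1: "\<forall>\<xi> \<eta>. \<xi> \<noteq> \<eta> \<longrightarrow> B \<xi> \<inter> B \<eta> = {}" unfolding B_def by auto
  have P2: "\<forall>\<xi>. inner_lebesgue (B \<xi>) = 0 \<and> inner_lebesgue (UNIV - B \<xi>) = 0"
  proof (intro allI conjI)
    fix \<xi>
    show "inner_lebesgue (B \<xi>) = 0"
    proof (rule inner_zero_if)
      fix K :: "(real^'n) set" assume "compact K" "emeasure lebesgue K > 0"
      then have "K \<in> KK" unfolding KK_def by blast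
      then obtain y where "y \<in> K" "lab y = \<xi> + 1" using hitK by blast
      then show "\<not> K \<subseteq> B \<xi>" unfolding B_def by auto
    qed
    show "inner_lebesgue (UNIV - B \<xi>) = 0"
    proof (rule inner_zero_if)
      fix K :: "(real^'n) set" assume "compact K" "emeasure lebesgue K > 0"
      then have "K \<in> KK" unfolding KK_def by blast
      then obtain y where "y \<in> K" "lab y = \<xi>" using hitK by blast
      then show "\<not> K \<subseteq> UNIV - B \<xi>" unfolding B_def by auto
    qed
  qed
  have P3: "\<forall>\<xi>. \<not> two_covering (B \<xi>)"
  proof (intro allI notI)
    fix \<xi> assume tc: "two_covering (B \<xi>)"
    have "card {0, e} = 2" using e0 by simp
    then obtain t where sub: "(\<lambda>c. c + t) ` {0, e} \<subseteq> B \<xi>"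
      using tc unfolding two_covering_def by blast
    then have "0 + t \<in> B \<xi>" "e + t \<in> B \<xi>" by blast+
    moreover have "e + t = t + e" by (rule add.commute)
    ultimately have "lab t = \<xi>" "lab (t + e) = \<xi>" unfolding B_def by simp_all
    then show False using lab_e[of t] by simp
  qed
  have P4: "lt_S_covering (range B) R0"
    unfolding lt_S_covering_def
  proof (intro conjI allI impI ballI)
    fix A1 A2 assume h12: "A1 \<in> range B" "A2 \<in> range B" "A1 \<noteq> A2"
    then obtain \<xi> \<eta> where "A1 = B \<xi>" "A2 = B \<eta>" by blast
    moreover then have "\<xi> \<noteq> \<eta>" using h12(3) by blast
    ultimately show "A1 \<inter> A2 = {}" using P1 by simp
  next
    fix F :: "(real^'n) set" assume "|F| <o R0"
    then have "Small F" unfolding Small_def .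
    then have "Small (\<rho> ` F)" by (rule Small_image)
    then obtain \<beta> where \<beta>: "\<rho> ` F \<subseteq> underS R0 \<beta>" using Small_bounded st by blast
    then have FA: "F \<subseteq> A \<beta>" unfolding A_def by auto
    have FZ: "(\<lambda>f. f + tz \<beta>) ` F \<subseteq> Z \<beta>" unfolding Z_def using FA by auto
    have cov: "(\<lambda>f. f + tz \<beta>) ` F \<subseteq> \<Union> (range B)"
    proof
      fix y assume "y \<in> (\<lambda>f. f + tz \<beta>) ` F"
      have "y \<in> B (lab y)" unfolding B_def by simp
      then show "y \<in> \<Union> (range B)" by blast
    qed
    have uniq: "a = b" if h: "A' \<in> range B" "a \<in> (\<lambda>f. f + tz \<beta>) ` F \<inter> A'"
      "b \<in> (\<lambda>f. f + tz \<beta>) ` F \<inter> A'" for A' a b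
    proof -
      obtain \<xi> where A': "A' = B \<xi>" using h(1) by blast
      have "lab a = \<xi>" "lab b = \<xi>" using h(2,3) A' unfolding B_def by blast+
      moreover have "a \<in> Z \<beta>" "b \<in> Z \<beta>" using h(2,3) FZ by blast+
      ultimately show "a = b" using zone_inj by metis
    qed
    show "\<exists>t. (\<lambda>f. f + t) ` F \<subseteq> \<Union> (range B) \<and>
             (\<forall>A\<in>range B. \<forall>a\<in>(\<lambda>f. f + t) ` F \<inter> A. \<forall>b\<in>(\<lambda>f. f + t) ` F \<inter> A. a = b)"
      by (rule exI[of _ "tz \<beta>"]) (use cov uniq in blast)
  qed
  show ?thesis by (rule exI[of _ B]) (use P1 P2 P3 P4 in blast)
qed



end
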